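(* Let $p_1,\ldots,p_m\in[0,1]$, $\alpha\in[0,1]$, and let $h_\alpha$ and $d_\alpha$ be as in the context. Then for every nonempty $S\subseteq\{1,\ldots,m\}$, \[ d_\alpha(S)=\max_{1\le u\le |S|}\Big(1-u+\big|\{i\in S: h_\alpha p_i\le u\alpha\}\big|\Big). \]
   Context: Setting: $m$ hypotheses with $p$-values $p_1,\ldots,p_m\in[0,1]$. For $I\subseteq\{1,\ldots,m\}$ and $1\le i\le |I|$, $p_{(i:I)}$ denotes the $i$-th smallest value of $\{p_j: j\in I\}$ (as a multiset). The Simes local test rejects $I$ ($I\in\mathcal{U}_\alpha$) iff there is $1\le i\le |I|$ with $|I|\,p_{(i:I)}\le i\alpha$ (so $\emptyset\notin\mathcal{U}_\alpha$). Closed testing: $\mathcal{X}_\alpha=\{I: J\in\mathcal{U}_\alpha \text{ for all } J\supseteq I\}$ (all sets are subsets of $\{1,\ldots,m\}$). For $S\subseteq\{1,\ldots,m\}$, $t_\alpha(S)=\max\{|I|: I\subseteq S,\ I\notin\mathcal{X}_\alpha\}$ and $d_\alpha(S)=|S|-t_\alpha(S)$. Let $r_1,\ldots,r_m$ be a permutation with $p_{r_1}\le\cdots\le p_{r_m}$, $K_i=\{r_{m-i+1},\ldots,r_m\}$, and $h_\alpha=\max\{0\le i\le m: K_i\notin\mathcal{U}_\alpha\}$. *)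

theory Defs
  imports Complex_Main "HOL-Library.Multiset"
begin

definition pord :: "(nat \<Rightarrow> real) \<Rightarrow> nat \<Rightarrow> nat set \<Rightarrow> real" where
  "pord p i I = sorted_list_of_multiset (image_mset p (mset_set I)) ! (i - 1)"

definition simes_rej :: "(nat \<Rightarrow> real) \<Rightarrow> real \<Rightarrow> nat set \<Rightarrow> bool" where
  "simes_rej p \<alpha> I \<longleftrightarrow> (\<exists>i\<in>{1..card I}. real (card I) * pord p i I \<le> real i * \<alpha>)"

definition closed_rej :: "nat \<Rightarrow> (nat \<Rightarrow> real) \<Rightarrow> real \<Rightarrow> nat set \<Rightarrow> bool" where
  "closed_rej m p \<alpha> I \<longleftrightarrow>
     (\<forall>J. I \<subseteq> J \<and> J \<subseteq> {1..m} \<longrightarrow> simes_rej p \<alpha> J)"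

definition t_alpha :: "nat \<Rightarrow> (nat \<Rightarrow> real) \<Rightarrow> real \<Rightarrow> nat set \<Rightarrow> nat" where
  "t_alpha m p \<alpha> S = Max {card I | I. I \<subseteq> S \<and> \<not> closed_rej m p \<alpha> I}"

definition d_alpha :: "nat \<Rightarrow> (nat \<Rightarrow> real) \<Rightarrow> real \<Rightarrow> nat set \<Rightarrow> nat" where
  "d_alpha m p \<alpha> S = card S - t_alpha m p \<alpha> S"

definition Kset :: "nat \<Rightarrow> (nat \<Rightarrow> nat) \<Rightarrow> nat \<Rightarrow> nat set" where
  "Kset m r i = r ` {m - i + 1..m}"

definition h_alpha :: "nat \<Rightarrow> (nat \<Rightarrow> real) \<Rightarrow> real \<Rightarrow> (nat \<Rightarrow> nat) \<Rightarrow> nat" where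
  "h_alpha m p \<alpha> r = Max {i. i \<le> m \<and> \<not> simes_rej p \<alpha> (Kset m r i)}"

end

theory Submission imports Defs begin

lemma sorted_nth_le_iff:
  fixes xs :: "real list"
  assumes "sorted xs" "i < length xs"
  shows "xs ! i \<le> x \<longleftrightarrow> Suc i \<le> length (filter (\<lambda>v. v \<le> x) xs)"
proof
  assume h: "xs ! i \<le> x"
  have "{0..i} \<subseteq> {j. j < length xs \<and> xs ! j \<le> x}"
  proof
    fix j assume "j \<in> {0..i}"
    then have "j \<le> i" by auto
    then have "xs ! j \<le> xs ! i" using assms sorted_nth_mono by blast
    then show "j \<in> {j. j < length xs \<and> xs ! j \<le> x}" using h \<open>j \<le> i\<close> assms by auto
  qed
  then have "card {0..i} \<le> card {j. j < length xs \<and> xs ! j \<le> x}"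
    by (intro card_mono) auto
  then show "Suc i \<le> length (filter (\<lambda>v. v \<le> x) xs)"
    by (simp add: length_filter_conv_card)
next
  assume h: "Suc i \<le> length (filter (\<lambda>v. v \<le> x) xs)"
  show "xs ! i \<le> x"
  proof (rule ccontr)
    assume "\<not> xs ! i \<le> x"
    have "{j. j < length xs \<and> xs ! j \<le> x} \<subseteq> {0..<i}"
    proof
      fix j assume j: "j \<in> {j. j < length xs \<and> xs ! j \<le> x}"
      show "j \<in> {0..<i}"
      proof (rule ccontr)
        assume "j \<notin> {0..<i}"
        then have "i \<le> j" by auto
        then have "xs ! i \<le> xs ! j" using assms j sorted_nth_mono by blast
        then show False using j \<open>\<not> xs ! i \<le> x\<close> by auto
      qed
    qed
    then have "card {j. j < length xs \<and> xs ! j \<le> x} \<le> i"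
      using card_mono[of "{0..<i}"] by fastforce
    then show False using h by (simp add: length_filter_conv_card)
  qed
qed

lemma pord_le_iff:
  assumes "finite I" "1 \<le> i" "i \<le> card I"
  shows "pord p i I \<le> x \<longleftrightarrow> i \<le> card {j\<in>I. p j \<le> x}"
proof -
  define xs where "xs = sorted_list_of_multiset (image_mset p (mset_set I))"
  have ms: "mset xs = image_mset p (mset_set I)" by (simp add: xs_def)
  have len: "length xs = card I" using ms
    by (metis size_image_mset size_mset size_mset_set)
  have "length (filter (\<lambda>v. v \<le> x) xs) = size (mset (filter (\<lambda>v. v \<le> x) xs))" by (simp only: size_mset)
  also have "\<dots> = size (filter_mset (\<lambda>v. v \<le> x) (image_mset p (mset_set I)))"
    by (simp add: ms)
  also have "\<dots> = card {j\<in>I. p j \<le> x}"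
    using assms(1) by (simp add: filter_mset_image_mset)
  finally have c: "length (filter (\<lambda>v. v \<le> x) xs) = card {j\<in>I. p j \<le> x}" .
  have "pord p i I = xs ! (i - 1)" by (simp add: pord_def xs_def)
  moreover have "sorted xs" by (simp add: xs_def)
  ultimately show ?thesis using sorted_nth_le_iff[of xs "i - 1" x] len c assms by auto
qed

lemma simes_rej_iff:
  assumes "finite J"
  shows "simes_rej p \<alpha> J \<longleftrightarrow>
    (\<exists>i\<in>{1..card J}. i \<le> card {j\<in>J. real (card J) * p j \<le> real i * \<alpha>})"
proof -
  { fix i assume i: "i \<in> {1..card J}"
    then have k: "real (card J) > 0" by auto
    have "real (card J) * pord p i J \<le> real i * \<alpha> \<longleftrightarrow> pord p i J \<le> real i * \<alpha> / real (card J)"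
      using k by (simp add: field_simps)
    also have "\<dots> \<longleftrightarrow> i \<le> card {j\<in>J. p j \<le> real i * \<alpha> / real (card J)}"
      using pord_le_iff[OF assms] i by auto
    also have "{j\<in>J. p j \<le> real i * \<alpha> / real (card J)} = {j\<in>J. real (card J) * p j \<le> real i * \<alpha>}"
      using k by (auto simp: field_simps)
    finally have "real (card J) * pord p i J \<le> real i * \<alpha> \<longleftrightarrow>
       i \<le> card {j\<in>J. real (card J) * p j \<le> real i * \<alpha>}" .
  }
  then show ?thesis unfolding simes_rej_def by auto
qed


lemma card_split:
  assumes "finite A"
  shows "card {j\<in>A. P j} + card {j\<in>A. \<not> P j} = card A"
proof -
  have "card ({j\<in>A. P j} \<union> {j\<in>A. \<not> P j}) = card {j\<in>A. P j} + card {j\<in>A. \<not> P j}"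
    using assms by (intro card_Un_disjoint) auto
  moreover have "{j\<in>A. P j} \<union> {j\<in>A. \<not> P j} = A" by auto
  ultimately show ?thesis by simp
qed

lemma upper_count:
  assumes "finite S" "I \<subseteq> S" "\<forall>a\<in>I. \<forall>b\<in>S-I. f b \<le> (f a :: real)"
    "\<forall>a b. f b \<le> f a \<longrightarrow> Q b \<longrightarrow> Q a"
  shows "card {j\<in>I. Q j} = min (card I) (card {j\<in>S. Q j})"
proof (cases "\<exists>b\<in>S-I. Q b")
  case True
  then obtain b where b: "b \<in> S - I" "Q b" by blast
  have "\<forall>a\<in>I. Q a" using assms(3,4) b by blast
  then have e: "{j\<in>I. Q j} = I" by auto
  have "I \<subseteq> {j\<in>S. Q j}" using \<open>\<forall>a\<in>I. Q a\<close> assms(2) by auto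
  then have "card I \<le> card {j\<in>S. Q j}" using assms(1) by (intro card_mono) auto
  then show ?thesis using e by simp
next
  case False
  then have e: "{j\<in>I. Q j} = {j\<in>S. Q j}" using assms(2) by auto
  have "card {j\<in>I. Q j} \<le> card I" using assms(1,2) finite_subset by (intro card_mono) auto
  then show ?thesis using e by simp
qed

lemma exists_upper:
  assumes "finite S"
  shows "k \<le> card S \<Longrightarrow> \<exists>I\<subseteq>S. card I = k \<and> (\<forall>a\<in>I. \<forall>b\<in>S-I. f b \<le> (f a :: real))"
proof (induction k)
  case 0
  then show ?case by (intro exI[of _ "{}"]) auto
next
  case (Suc k)
  then obtain I where I: "I \<subseteq> S" "card I = k" "\<forall>a\<in>I. \<forall>b\<in>S-I. f b \<le> f a" by auto
  have fin: "finite (S - I)" using assms by auto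
  have "card I < card S" using I Suc by auto
  then have ne: "S - I \<noteq> {}" using I(1) by auto
  have "Max (f ` (S - I)) \<in> f ` (S - I)" using fin ne by (intro Max_in) auto
  then obtain y where y: "y \<in> S - I" "f y = Max (f ` (S - I))" by (metis imageE)
  have ymax: "\<forall>b\<in>S-I. f b \<le> f y" using y(2) fin by auto
  have "finite I" using I(1) assms finite_subset by auto
  then have "card (insert y I) = Suc k" using y(1) I(2) by auto
  moreover have "insert y I \<subseteq> S" using y(1) I(1) by auto
  moreover have "\<forall>a\<in>insert y I. \<forall>b\<in>S - insert y I. f b \<le> f a"
    using I(3) ymax by auto
  ultimately show ?case by blast
qed

context
  fixes m :: nat and p :: "nat \<Rightarrow> real" and \<alpha> :: real and r :: "nat \<Rightarrow> nat"
  assumes p01: "\<forall>i\<in>{1..m}. 0 \<le> p i \<and> p i \<le> 1"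
    and alpha01: "0 \<le> \<alpha>" "\<alpha> \<le> 1"
    and rperm: "bij_betw r {1..m} {1..m}"
    and rsorted: "\<forall>i j. 1 \<le> i \<and> i \<le> j \<and> j \<le> m \<longrightarrow> p (r i) \<le> p (r j)"
begin

lemma K_card: "s \<le> m \<Longrightarrow> card (Kset m r s) = s"
proof -
  assume s: "s \<le> m"
  have "inj_on r {m - s + 1..m}"
    using bij_betw_imp_inj_on[OF rperm] by (rule inj_on_subset) auto
  then have "card (Kset m r s) = card {m - s + 1..m}" unfolding Kset_def by (rule card_image)
  then show ?thesis using s by simp
qed

lemma K_sub: "Kset m r s \<subseteq> {1..m}"
proof -
  have "Kset m r s \<subseteq> r ` {1..m}" unfolding Kset_def by (intro image_mono) auto
  then show ?thesis using bij_betw_imp_surj_on[OF rperm] by simp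
qed

lemma K_fin: "finite (Kset m r s)" unfolding Kset_def by simp

lemma K_zero: "Kset m r 0 = {}" unfolding Kset_def by simp

lemma K_mono: "s \<le> s' \<Longrightarrow> Kset m r s \<subseteq> Kset m r s'"
  unfolding Kset_def by (intro image_mono) auto

lemma K_Suc: "s < m \<Longrightarrow> Kset m r (Suc s) = insert (r (m - s)) (Kset m r s)"
proof -
  assume "s < m"
  then have "{m - Suc s + 1..m} = insert (m - s) {m - s + 1..m}" by auto
  then show ?thesis unfolding Kset_def by simp
qed

lemma K_upper: "a \<in> Kset m r s \<Longrightarrow> b \<in> {1..m} \<Longrightarrow> b \<notin> Kset m r s \<Longrightarrow> p b \<le> p a"
proof -
  assume a: "a \<in> Kset m r s" and b: "b \<in> {1..m}" and nb: "b \<notin> Kset m r s"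
  obtain t where t: "t \<in> {m - s + 1..m}" "a = r t" using a unfolding Kset_def by auto
  have "b \<in> r ` {1..m}" using b bij_betw_imp_surj_on[OF rperm] by simp
  then obtain u where u: "u \<in> {1..m}" "b = r u" by auto
  have "u \<notin> {m - s + 1..m}" using nb u unfolding Kset_def by auto
  then have "u \<le> t" using u t by auto
  then show ?thesis using rsorted u t by auto
qed

abbreviation hh where "hh \<equiv> h_alpha m p \<alpha> r"

lemma h_props:
  shows "hh \<le> m" "\<not> simes_rej p \<alpha> (Kset m r hh)"
    and "\<And>k. k \<le> m \<Longrightarrow> \<not> simes_rej p \<alpha> (Kset m r k) \<Longrightarrow> k \<le> hh"
proof -
  let ?H = "{i. i \<le> m \<and> \<not> simes_rej p \<alpha> (Kset m r i)}"
  have fin: "finite ?H" by auto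
  have "0 \<in> ?H" using K_zero by (simp add: simes_rej_def)
  then have ne: "?H \<noteq> {}" by auto
  have "hh \<in> ?H" unfolding h_alpha_def using Max_in[OF fin ne] .
  then show "hh \<le> m" "\<not> simes_rej p \<alpha> (Kset m r hh)" by auto
  fix k assume "k \<le> m" "\<not> simes_rej p \<alpha> (Kset m r k)"
  then show "k \<le> hh" unfolding h_alpha_def using Max_ge[OF fin] by auto
qed

lemma NR_to_K:
  assumes J: "J \<subseteq> {1..m}" and nr: "\<not> simes_rej p \<alpha> J"
  shows "\<not> simes_rej p \<alpha> (Kset m r (card J))"
proof -
  let ?k = "card J"
  have finJ: "finite J" using J finite_subset by auto
  have km: "?k \<le> m" using card_mono[OF _ J] by simp
  have cK: "card (Kset m r ?k) = ?k" using K_card km .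
  have "\<not> (i \<le> card {j\<in>Kset m r ?k. real ?k * p j \<le> real i * \<alpha>})" if i: "i \<in> {1..?k}" for i
  proof -
    let ?Q = "\<lambda>j. real i * \<alpha> < real ?k * p j"
    have up: "\<forall>a b. p b \<le> p a \<longrightarrow> ?Q b \<longrightarrow> ?Q a"
    proof (intro allI impI)
      fix a b assume "p b \<le> p a" "?Q b"
      moreover have "real ?k * p b \<le> real ?k * p a" by (rule mult_left_mono) (use \<open>p b \<le> p a\<close> in auto)
      ultimately show "?Q a" by linarith
    qed
    have upK: "\<forall>a\<in>Kset m r ?k. \<forall>b\<in>{1..m} - Kset m r ?k. p b \<le> p a"
      using K_upper by blast
    have c1: "card {j\<in>Kset m r ?k. ?Q j} = min ?k (card {j\<in>{1..m}. ?Q j})"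
      using upper_count[OF _ K_sub upK up] cK by simp
    have c2: "card {j\<in>J. ?Q j} \<le> ?k" using finJ by (intro card_mono) auto
    have c3: "card {j\<in>J. ?Q j} \<le> card {j\<in>{1..m}. ?Q j}" using J by (intro card_mono) auto
    have s1: "card {j\<in>Kset m r ?k. ?Q j} + card {j\<in>Kset m r ?k. \<not> ?Q j} = ?k"
      using card_split[OF K_fin] cK by metis
    have s2: "card {j\<in>J. ?Q j} + card {j\<in>J. \<not> ?Q j} = ?k"
      using card_split[OF finJ] by metis
    have "card {j\<in>Kset m r ?k. \<not> ?Q j} \<le> card {j\<in>J. \<not> ?Q j}" using c1 c2 c3 s1 s2 by linarith
    moreover have "\<not> (i \<le> card {j\<in>J. real ?k * p j \<le> real i * \<alpha>})"
      using nr i simes_rej_iff[OF finJ] by auto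
    ultimately show ?thesis by (simp add: not_less)
  qed
  then show ?thesis using simes_rej_iff[OF K_fin] cK by auto
qed

lemma NR_card_le_h: "J \<subseteq> {1..m} \<Longrightarrow> \<not> simes_rej p \<alpha> J \<Longrightarrow> card J \<le> hh"
proof -
  assume J: "J \<subseteq> {1..m}" and nr: "\<not> simes_rej p \<alpha> J"
  have "card J \<le> m" using card_mono[OF _ J] by simp
  then show ?thesis using h_props(3) NR_to_K[OF J nr] by blast
qed

end

context
  fixes m :: nat and p :: "nat \<Rightarrow> real" and \<alpha> :: real and r :: "nat \<Rightarrow> nat"
  assumes p01: "\<forall>i\<in>{1..m}. 0 \<le> p i \<and> p i \<le> 1"
    and alpha01: "0 \<le> \<alpha>" "\<alpha> \<le> 1"
    and rperm: "bij_betw r {1..m} {1..m}"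
    and rsorted: "\<forall>i j. 1 \<le> i \<and> i \<le> j \<and> j \<le> m \<longrightarrow> p (r i) \<le> p (r j)"
begin

lemma extend:
  assumes I: "I \<subseteq> {1..m}"
    and cond: "\<forall>i\<ge>1. card {j\<in>I. real (h_alpha m p \<alpha> r) * p j \<le> real i * \<alpha>} < i"
  shows "\<exists>J. I \<subseteq> J \<and> J \<subseteq> {1..m} \<and> \<not> simes_rej p \<alpha> J"
proof -
  let ?h = "h_alpha m p \<alpha> r"
  let ?K = "Kset m r"
  note hp = h_props[OF p01 alpha01 rperm rsorted]
  note Kc = K_card[OF p01 alpha01 rperm rsorted]
  note Ks = K_sub[OF p01 alpha01 rperm rsorted]
  note Ku = K_upper[OF p01 alpha01 rperm rsorted]
  note KS = K_Suc[OF p01 alpha01 rperm rsorted]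
  note Kf = K_fin[OF p01 alpha01 rperm rsorted]
  note Km = K_mono[OF p01 alpha01 rperm rsorted]
  note K0 = K_zero[OF p01 alpha01 rperm rsorted]
  have finI: "finite I" using I finite_subset by auto
  show ?thesis
  proof (cases "?h \<le> card I")
    case True
    have "\<not> simes_rej p \<alpha> I"
    proof -
      have "\<not> (i \<le> card {j\<in>I. real (card I) * p j \<le> real i * \<alpha>})" if i: "i \<in> {1..card I}" for i
      proof -
        have "{j\<in>I. real (card I) * p j \<le> real i * \<alpha>} \<subseteq> {j\<in>I. real ?h * p j \<le> real i * \<alpha>}"
        proof
          fix j assume j: "j \<in> {j\<in>I. real (card I) * p j \<le> real i * \<alpha>}"
          then have "0 \<le> p j" using I p01 by auto
          then have "real ?h * p j \<le> real (card I) * p j" using True by (intro mult_right_mono) auto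
          then show "j \<in> {j\<in>I. real ?h * p j \<le> real i * \<alpha>}" using j by auto
        qed
        then have "card {j\<in>I. real (card I) * p j \<le> real i * \<alpha>} \<le> card {j\<in>I. real ?h * p j \<le> real i * \<alpha>}"
          using finI by (intro card_mono) auto
        then show ?thesis using cond i by (meson atLeastAtMost_iff le_trans not_less)
      qed
      then show ?thesis using simes_rej_iff[OF finI] by auto
    qed
    then show ?thesis using I by auto
  next
    case False
    define \<phi> where "\<phi> s = card (I \<union> ?K s)" for s
    have hK: "card (?K ?h) = ?h" using Kc hp(1) .
    have "?h \<le> \<phi> ?h" unfolding \<phi>_def
      using card_mono[of "I \<union> ?K ?h" "?K ?h"] finI Kf hK by auto
    define s where "s = (LEAST s. ?h \<le> \<phi> s)"
    have s1: "?h \<le> \<phi> s" unfolding s_def by (rule LeastI) fact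
    have s2: "s \<le> ?h" unfolding s_def by (rule Least_le) fact
    have "\<phi> 0 = card I" unfolding \<phi>_def using K0 by simp
    then have "s \<noteq> 0" using s1 False by (cases s) auto
    then obtain s' where s': "s = Suc s'" using not0_implies_Suc by blast
    have "\<not> ?h \<le> \<phi> s'" unfolding s_def using s' s_def by (metis lessI not_less_Least)
    moreover have "\<phi> (Suc s') \<le> Suc (\<phi> s')"
    proof -
      have "s' < m" using s' s2 hp(1) by auto
      then have "I \<union> ?K (Suc s') = insert (r (m - s')) (I \<union> ?K s')" using KS by auto
      then show ?thesis unfolding \<phi>_def using finI Kf by (simp add: card_insert_if)
    qed
    ultimately have phis: "\<phi> s = ?h" using s1 s' by auto
    define J where "J = I \<union> ?K s"
    have cJ: "card J = ?h" using phis unfolding J_def \<phi>_def by simp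
    have JS: "J \<subseteq> {1..m}" unfolding J_def using I Ks by auto
    have finJ: "finite J" unfolding J_def using finI Kf by auto
    have sm: "s \<le> m" using s2 hp(1) by auto
    have cKs: "card (?K s) = s" using Kc sm .
    have KsKh: "?K s \<subseteq> ?K ?h" using Km s2 .
    have NRh: "\<forall>i\<in>{1..?h}. \<not> (i \<le> card {j\<in>?K ?h. real ?h * p j \<le> real i * \<alpha>})"
    proof -
      have "\<not> (\<exists>i\<in>{1..card (?K ?h)}. i \<le> card {j\<in>?K ?h. real (card (?K ?h)) * p j \<le> real i * \<alpha>})"
        using hp(2) simes_rej_iff[OF Kf[of ?h]] by blast
      then show ?thesis unfolding hK by blast
    qed
    have "\<not> (i \<le> card {j\<in>J. real (card J) * p j \<le> real i * \<alpha>})" if i: "i \<in> {1..card J}" for i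
    proof -
      let ?Q = "\<lambda>j. real ?h * p j \<le> real i * \<alpha>"
      show ?thesis
      proof (cases "\<exists>a\<in>?K s. ?Q a")
        case False
        then have "{j\<in>J. ?Q j} \<subseteq> {j\<in>I. ?Q j}" unfolding J_def by auto
        then have "card {j\<in>J. ?Q j} \<le> card {j\<in>I. ?Q j}" using finI by (intro card_mono) auto
        moreover have "card {j\<in>I. ?Q j} < i" using cond i by auto
        ultimately show ?thesis by (simp add: cJ)
      next
        case True
        then obtain a where a: "a \<in> ?K s" "?Q a" by blast
        have sub1: "?K ?h - ?K s \<subseteq> {j\<in>?K ?h. ?Q j}"
        proof
          fix b assume b: "b \<in> ?K ?h - ?K s"
          then have "b \<in> {1..m}" using Ks[of ?h] by blast
          then have "p b \<le> p a" using Ku[OF a(1)] b by auto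
          then have "real ?h * p b \<le> real ?h * p a" by (intro mult_left_mono) auto
          then show "b \<in> {j\<in>?K ?h. ?Q j}" using a b by auto
        qed
        have sub2: "{j\<in>?K s. ?Q j} \<subseteq> {j\<in>?K ?h. ?Q j}" using KsKh by auto
        have "card ((?K ?h - ?K s) \<union> {j\<in>?K s. ?Q j}) = card (?K ?h - ?K s) + card {j\<in>?K s. ?Q j}"
          using Kf by (intro card_Un_disjoint) auto
        moreover have "card (?K ?h - ?K s) = ?h - s" using card_Diff_subset[OF Kf KsKh] hK cKs by simp
        moreover have "card ((?K ?h - ?K s) \<union> {j\<in>?K s. ?Q j}) \<le> card {j\<in>?K ?h. ?Q j}"
          using sub1 sub2 Kf by (intro card_mono) auto
        ultimately have A: "?h - s + card {j\<in>?K s. ?Q j} \<le> card {j\<in>?K ?h. ?Q j}" by simp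
        have "{j\<in>J. ?Q j} \<subseteq> (I - ?K s) \<union> {j\<in>?K s. ?Q j}" unfolding J_def by auto
        then have "card {j\<in>J. ?Q j} \<le> card ((I - ?K s) \<union> {j\<in>?K s. ?Q j})"
          using finI Kf by (intro card_mono) auto
        also have "\<dots> \<le> card (I - ?K s) + card {j\<in>?K s. ?Q j}" by (rule card_Un_le)
        also have "card (I - ?K s) = ?h - s"
        proof -
          have "J = (I - ?K s) \<union> ?K s" unfolding J_def by auto
          then have "card J = card (I - ?K s) + card (?K s)"
            using card_Un_disjoint[of "I - ?K s" "?K s"] finI Kf by auto
          then show ?thesis using cJ cKs by simp
        qed
        finally have "card {j\<in>J. ?Q j} \<le> card {j\<in>?K ?h. ?Q j}" using A by linarith
        moreover have "\<not> (i \<le> card {j\<in>?K ?h. ?Q j})" using NRh i cJ by auto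
        ultimately show ?thesis using cJ by auto
      qed
    qed
    then have "\<not> simes_rej p \<alpha> J" using simes_rej_iff[OF finJ] by auto
    moreover have "I \<subseteq> J" unfolding J_def by auto
    ultimately show ?thesis using JS by auto
  qed
qed

end

theorem theorem1:
  fixes m :: nat and p :: "nat \<Rightarrow> real" and \<alpha> :: real and r :: "nat \<Rightarrow> nat"
    and S :: "nat set"
  assumes p01: "\<forall>i\<in>{1..m}. 0 \<le> p i \<and> p i \<le> 1"
    and alpha01: "0 \<le> \<alpha>" "\<alpha> \<le> 1"
    and rperm: "bij_betw r {1..m} {1..m}"
    and rsorted: "\<forall>i j. 1 \<le> i \<and> i \<le> j \<and> j \<le> m \<longrightarrow> p (r i) \<le> p (r j)"
    and S: "S \<subseteq> {1..m}" "S \<noteq> {}"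
  shows "int (d_alpha m p \<alpha> S) =
    Max ((\<lambda>u. 1 - int u + int (card {i\<in>S. real (h_alpha m p \<alpha> r) * p i \<le> real u * \<alpha>}))
          ` {1..card S})"
proof -
  let ?h = "h_alpha m p \<alpha> r"
  define n where "n = card S"
  have finS: "finite S" using S(1) finite_subset by auto
  have n1: "1 \<le> n" using finS S(2) unfolding n_def by (simp add: Suc_le_eq card_gt_0_iff)
  define g where "g u = card {j\<in>S. real u * \<alpha> < real ?h * p j}" for u :: nat
  define c where "c u = card {j\<in>S. real ?h * p j \<le> real u * \<alpha>}" for u :: nat
  have cg: "c u + g u = n" for u
    using card_split[OF finS, of "\<lambda>j. real ?h * p j \<le> real u * \<alpha>"] unfolding c_def g_def n_def
    by (simp add: not_le)
  define F where "F = (\<lambda>u. u - 1 + g u) ` {1..n}"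
  have finF: "finite F" "F \<noteq> {}" unfolding F_def using n1 by auto
  define ts where "ts = Min F"
  have tsle: "ts \<le> u - 1 + g u" if "u \<in> {1..n}" for u
    unfolding ts_def F_def using that finF by (intro Min_le) (auto simp: F_def)
  have tsn: "ts \<le> n" using tsle[of 1] n1 cg[of 1] by auto
  have tsin: "ts \<in> F" unfolding ts_def using finF by (rule Min_in)
  define T where "T = {card I | I. I \<subseteq> S \<and> \<not> closed_rej m p \<alpha> I}"
  have T_ub: "x \<le> ts" if "x \<in> T" for x
  proof -
    obtain I where I: "x = card I" "I \<subseteq> S" "\<not> closed_rej m p \<alpha> I" using \<open>x \<in> T\<close> unfolding T_def by auto
    obtain J where J: "I \<subseteq> J" "J \<subseteq> {1..m}" "\<not> simes_rej p \<alpha> J"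
      using I(3) unfolding closed_rej_def by auto
    have finJ: "finite J" using J(2) finite_subset by auto
    have finI: "finite I" using I(2) finS finite_subset by auto
    let ?k = "card J"
    have kh: "?k \<le> ?h" using NR_card_le_h[OF p01 alpha01 rperm rsorted J(2,3)] .
    have "card I \<le> u - 1 + g u" if u: "u \<in> {1..n}" for u
    proof (cases "u \<le> ?k")
      case True
      have nr: "\<not> (u \<le> card {j\<in>J. real ?k * p j \<le> real u * \<alpha>})"
        using J(3) simes_rej_iff[OF finJ] True u by auto
      have "{j\<in>I. real ?h * p j \<le> real u * \<alpha>} \<subseteq> {j\<in>J. real ?k * p j \<le> real u * \<alpha>}"
      proof
        fix j assume j: "j \<in> {j\<in>I. real ?h * p j \<le> real u * \<alpha>}"
        then have "j \<in> {1..m}" using J by auto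
        then have "0 \<le> p j" using p01 by auto
        then have "real ?k * p j \<le> real ?h * p j" using kh by (intro mult_right_mono) auto
        then show "j \<in> {j\<in>J. real ?k * p j \<le> real u * \<alpha>}" using j J(1) by auto
      qed
      then have "card {j\<in>I. real ?h * p j \<le> real u * \<alpha>} \<le> card {j\<in>J. real ?k * p j \<le> real u * \<alpha>}"
        using finJ by (intro card_mono) auto
      then have a: "card {j\<in>I. real ?h * p j \<le> real u * \<alpha>} \<le> u - 1"
        using nr by linarith
      have b: "card {j\<in>I. \<not> real ?h * p j \<le> real u * \<alpha>} \<le> g u"
        unfolding g_def using I(2) finS by (intro card_mono) auto
      show ?thesis using card_split[OF finI, of "\<lambda>j. real ?h * p j \<le> real u * \<alpha>"] a b by linarith
    next
      case False
      have "card I \<le> ?k" using card_mono[OF finJ J(1)] .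
      then show ?thesis using False by linarith
    qed
    then show ?thesis unfolding I(1) ts_def using finF by (subst Min_ge_iff) (auto simp: F_def)
  qed
  have ts_in: "ts \<in> T"
  proof -
    obtain I where I: "I \<subseteq> S" "card I = ts" "\<forall>a\<in>I. \<forall>b\<in>S-I. p b \<le> p a"
      using exists_upper[OF finS, of ts p] tsn unfolding n_def by auto
    have finI: "finite I" using I(1) finS finite_subset by auto
    have cond: "\<forall>i\<ge>1. card {j\<in>I. real ?h * p j \<le> real i * \<alpha>} < i"
    proof (intro allI impI)
      fix i :: nat assume i: "1 \<le> i"
      let ?Q = "\<lambda>j. real i * \<alpha> < real ?h * p j"
      have up: "\<forall>a b. p b \<le> p a \<longrightarrow> ?Q b \<longrightarrow> ?Q a"
      proof (intro allI impI)
        fix a b assume "p b \<le> p a" "?Q b"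
        moreover have "real ?h * p b \<le> real ?h * p a" by (rule mult_left_mono) (use \<open>p b \<le> p a\<close> in auto)
        ultimately show "?Q a" by linarith
      qed
      have c1: "card {j\<in>I. ?Q j} = min ts (g i)"
        using upper_count[OF finS I(1) I(3) up] I(2) unfolding g_def by simp
      have c2: "card {j\<in>I. ?Q j} + card {j\<in>I. \<not> ?Q j} = ts"
        using card_split[OF finI] I(2) by metis
      have "ts < i + g i"
      proof (cases "i \<le> n")
        case True
        then show ?thesis using tsle[of i] i by auto
      next
        case False
        then show ?thesis using tsn by auto
      qed
      then have "card {j\<in>I. \<not> ?Q j} < i"
      proof (cases "ts \<le> g i")
        case True
        then show ?thesis using c1 c2 i by (simp add: min_def)
      next
        case False
        then have "card {j\<in>I. ?Q j} = g i" using c1 by (simp add: min_def)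
        then show ?thesis using c2 \<open>ts < i + g i\<close> by linarith
      qed
      then show "card {j\<in>I. real ?h * p j \<le> real i * \<alpha>} < i" by (simp add: not_less)
    qed
    have "I \<subseteq> {1..m}" using I(1) S(1) by auto
    then obtain J where "I \<subseteq> J" "J \<subseteq> {1..m}" "\<not> simes_rej p \<alpha> J"
      using extend[OF p01 alpha01 rperm rsorted _ cond] by blast
    then have "\<not> closed_rej m p \<alpha> I" unfolding closed_rej_def by auto
    then show ?thesis unfolding T_def using I by auto
  qed
  have finT: "finite T"
  proof -
    have "T \<subseteq> {0..n}" unfolding T_def n_def using finS by (auto intro: card_mono)
    then show ?thesis using finite_subset by blast
  qed
  have tT: "t_alpha m p \<alpha> S = ts"
    unfolding t_alpha_def T_def[symmetric] using finT ts_in T_ub by (intro Max_eqI) auto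
  have lhs: "int (d_alpha m p \<alpha> S) = int n - int ts"
    unfolding d_alpha_def tT n_def[symmetric] using tsn by simp
  have eq: "1 - int u + int (c u) = int n - int (u - 1 + g u)" if "u \<in> {1..n}" for u
    using cg[of u] that by auto
  have "Max ((\<lambda>u. 1 - int u + int (c u)) ` {1..n}) = int n - int ts"
  proof (rule Max_eqI)
    show "finite ((\<lambda>u. 1 - int u + int (c u)) ` {1..n})" by auto
    fix y assume "y \<in> (\<lambda>u. 1 - int u + int (c u)) ` {1..n}"
    then obtain u where u: "u \<in> {1..n}" "y = 1 - int u + int (c u)" by auto
    show "y \<le> int n - int ts" using u eq[OF u(1)] tsle[OF u(1)] by linarith
  next
    obtain u where u: "u \<in> {1..n}" "ts = u - 1 + g u" using tsin unfolding F_def by auto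
    then show "int n - int ts \<in> (\<lambda>u. 1 - int u + int (c u)) ` {1..n}"
      using eq[OF u(1)] by (intro image_eqI[of _ _ u]) auto
  qed
  then show ?thesis using lhs unfolding c_def n_def by simp
qed

end
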